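(* Let $n\ge 2$ and $j\ge 1$ be integers. There are $n$ Bernoulli arms whose means are i.i.d. uniform on $(0,1)$; given the means, each arm has i.i.d. Bernoulli observations with success probability equal to its mean, independent across arms. For each arm $i$ let $s_i$ be its number of successes among its first $j$ observations. Let $N^*$ be the number of arms $i$, other than the arm with the largest mean, such that $s_i=0$ and $\max_{l\ne i}s_l=j$. Let $U$ be uniform on $(0,1)$ and $W=U^{1/n}$. Then $\mathbb{E}[N^*]=(n-1)D$, where $$D=\mathbb{E}\Big[\frac{1-(1-W)^{j+1}}{(j+1)W}\Big(1-(1-W^j)\Big(1-\frac{W^j}{j+1}\Big)^{n-2}\Big)\Big].$$
   Context: $N^*$ is the number of non-best arms eliminated by early elimination with parameter $j$ (an arm is eliminated after round $j$ if it had all failures in its first $j$ observations while another arm had all successes). *)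

theory Defs
  imports "HOL-Probability.Probability"
begin

text \<open>Outcome of one arm: (its mean, its first j observations as a Boolean sequence;
only indices below j are relevant).\<close>

definition obs_space :: "nat \<Rightarrow> (nat \<Rightarrow> bool) measure" where
  "obs_space j = PiM {..<j} (\<lambda>_. count_space UNIV)"

definition bern_obs :: "nat \<Rightarrow> real \<Rightarrow> (nat \<Rightarrow> bool) measure" where
  "bern_obs j p = PiM {..<j} (\<lambda>_. measure_pmf (bernoulli_pmf p))"

definition arm_law :: "nat \<Rightarrow> (real \<times> (nat \<Rightarrow> bool)) measure" where
  "arm_law j = uniform_measure lborel {0<..<1::real} \<bind>
     (\<lambda>p. distr (bern_obs j p) (borel \<Otimes>\<^sub>M obs_space j) (\<lambda>x. (p, x)))"

definition bandit_law :: "nat \<Rightarrow> nat \<Rightarrow> (nat \<Rightarrow> real \<times> (nat \<Rightarrow> bool)) measure" where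
  "bandit_law n j = PiM {..<n} (\<lambda>_. arm_law j)"

definition succ :: "nat \<Rightarrow> (nat \<Rightarrow> real \<times> (nat \<Rightarrow> bool)) \<Rightarrow> nat \<Rightarrow> nat" where
  "succ j \<omega> i = card {k \<in> {..<j}. snd (\<omega> i) k}"

text \<open>N*: number of non-best arms i with s_i = 0 and max over l \<noteq> i of s_l = j.
  "Non-best" = some other arm has strictly larger mean (ties have probability 0).\<close>
definition Nstar :: "nat \<Rightarrow> nat \<Rightarrow> (nat \<Rightarrow> real \<times> (nat \<Rightarrow> bool)) \<Rightarrow> nat" where
  "Nstar n j \<omega> = card {i \<in> {..<n}.
      (\<exists>l<n. fst (\<omega> l) > fst (\<omega> i)) \<and> succ j \<omega> i = 0 \<and>
      Max {succ j \<omega> l | l. l < n \<and> l \<noteq> i} = j}"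

definition Dconst :: "nat \<Rightarrow> nat \<Rightarrow> real" where
  "Dconst n j = (\<integral>u. (let w = u powr (1 / real n) in
      (1 - (1 - w) ^ (j + 1)) / (real (j + 1) * w) *
      (1 - (1 - w ^ j) * (1 - w ^ j / real (j + 1)) ^ (n - 2)))
     \<partial>(uniform_measure lborel {0<..<1::real}))"

end

theory Submission
  imports Defs
begin


lemma sets_bern_obs[measurable_cong]: "sets (bern_obs j p) = sets (obs_space j)"
  unfolding bern_obs_def obs_space_def by (intro sets_PiM_cong) auto

lemma space_bern_obs: "space (bern_obs j p) = space (obs_space j)"
  using sets_bern_obs by (rule sets_eq_imp_space_eq)

lemma space_obs_space: "space (obs_space j) = PiE {..<j} (\<lambda>_. UNIV)"
  unfolding obs_space_def by (simp add: space_PiM)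

lemma prob_space_bern_obs: "prob_space (bern_obs j p)"
  unfolding bern_obs_def by (intro prob_space_PiM) (simp add: prob_space_measure_pmf)

lemma emeasure_bern_obs_PiE:
  "emeasure (bern_obs j p) (PiE {..<j} A) = (\<Prod>k<j. ennreal (measure_pmf.prob (bernoulli_pmf p) (A k)))"
proof -
  interpret product_prob_space "\<lambda>_. measure_pmf (bernoulli_pmf p)" UNIV
    by unfold_locales
  show ?thesis unfolding bern_obs_def
    by (subst emeasure_PiM) (auto simp: measure_pmf.emeasure_eq_measure)
qed

lemma pmf_bern_clamp: "pmf (bernoulli_pmf p) b = (if b then min 1 (max 0 p) else 1 - min 1 (max 0 p))"
  by (simp add: bernoulli_pmf.rep_eq)

lemma finite_obs: "finite (space (obs_space j))"
  unfolding space_obs_space by (intro finite_PiE) auto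

lemma bern_obs_measurable: "bern_obs j \<in> borel \<rightarrow>\<^sub>M subprob_algebra (obs_space j)"
proof (rule measurable_subprob_algebra)
  fix p show "subprob_space (bern_obs j p)"
    using prob_space_bern_obs prob_space_imp_subprob_space by blast
  show "sets (bern_obs j p) = sets (obs_space j)" by (rule sets_bern_obs)
next
  fix A assume A: "A \<in> sets (obs_space j)"
  then have As: "A \<subseteq> space (obs_space j)" by (rule sets.sets_into_space)
  then have fA: "finite A" using finite_obs finite_subset by blast
  have single: "{x} = PiE {..<j} (\<lambda>k. {x k})" if "x \<in> space (obs_space j)" for x
    using that unfolding space_obs_space by (auto simp: PiE_iff extensional_def)
  have "(\<lambda>p. emeasure (bern_obs j p) A) = (\<lambda>p. \<Sum>x\<in>A. emeasure (bern_obs j p) {x})"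
  proof
    fix p
    show "emeasure (bern_obs j p) A = (\<Sum>x\<in>A. emeasure (bern_obs j p) {x})"
    proof (rule emeasure_eq_sum_singleton[OF fA])
      fix x assume "x \<in> A"
      then have "x \<in> space (obs_space j)" using As by auto
      then have "{x} = PiE {..<j} (\<lambda>k. {x k})" by (rule single)
      then show "{x} \<in> sets (bern_obs j p)" unfolding sets_bern_obs obs_space_def
        by (auto intro!: sets_PiM_I_finite)
    qed
  qed
  also have "\<dots> = (\<lambda>p. \<Sum>x\<in>A. \<Prod>k<j. ennreal (pmf (bernoulli_pmf p) (x k)))"
  proof
    fix p
    show "(\<Sum>x\<in>A. emeasure (bern_obs j p) {x}) = (\<Sum>x\<in>A. \<Prod>k<j. ennreal (pmf (bernoulli_pmf p) (x k)))"
    proof (rule sum.cong[OF refl])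
      fix x assume "x \<in> A"
      then have "x \<in> space (obs_space j)" using As by auto
      then show "emeasure (bern_obs j p) {x} = (\<Prod>k<j. ennreal (pmf (bernoulli_pmf p) (x k)))"
        by (subst single) (auto simp: emeasure_bern_obs_PiE measure_pmf_single)
    qed
  qed
  finally show "(\<lambda>p. emeasure (bern_obs j p) A) \<in> borel_measurable borel"
    unfolding pmf_bern_clamp by simp
qed



definition K :: "nat \<Rightarrow> real \<Rightarrow> (real \<times> (nat \<Rightarrow> bool)) measure" where
  "K j p = distr (bern_obs j p) (borel \<Otimes>\<^sub>M obs_space j) (\<lambda>x. (p, x))"

definition U :: "real measure" where "U = uniform_measure lborel {0<..<1::real}"

lemma arm_law_K: "arm_law j = U \<bind> K j"
  unfolding arm_law_def K_def U_def by simp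

lemma sets_U[measurable_cong]: "sets U = sets borel" unfolding U_def by simp
lemma space_U: "space U = UNIV" unfolding U_def by simp

lemma prob_space_U: "prob_space U" unfolding U_def
  by (intro prob_space_uniform_measure) auto

lemma K_measurable: "K j \<in> U \<rightarrow>\<^sub>M subprob_algebra (borel \<Otimes>\<^sub>M obs_space j)"
proof -
  have "(\<lambda>p. distr (bern_obs j p) (borel \<Otimes>\<^sub>M obs_space j) (\<lambda>x. (p, x))) \<in> borel \<rightarrow>\<^sub>M subprob_algebra (borel \<Otimes>\<^sub>M obs_space j)"
    by (rule measurable_distr2[OF _ bern_obs_measurable]) simp
  then show ?thesis unfolding K_def by (simp add: measurable_cong_sets[OF sets_U refl])
qed

lemma sets_arm[measurable_cong]: "sets (arm_law j) = sets (borel \<Otimes>\<^sub>M obs_space j)"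
  unfolding arm_law_K by (rule sets_bind_measurable[OF K_measurable]) (simp add: space_U)

lemma space_arm: "space (arm_law j) = space (borel \<Otimes>\<^sub>M obs_space j)"
  using sets_arm by (rule sets_eq_imp_space_eq)

lemma prob_space_arm: "prob_space (arm_law j)"
proof -
  interpret prob_space U by (rule prob_space_U)
  show ?thesis unfolding arm_law_K
  proof (rule prob_space_bind[OF _ K_measurable])
    show "AE x in U. prob_space (K j x)"
      unfolding K_def
      by (intro AE_I2 prob_space.prob_space_distr prob_space_bern_obs) measurable
  qed
qed

lemma arm_nn:
  assumes f[measurable]: "f \<in> borel_measurable (borel \<Otimes>\<^sub>M obs_space j)"
  shows "(\<integral>\<^sup>+x. f x \<partial>arm_law j) =
    (\<integral>\<^sup>+p. (\<integral>\<^sup>+y. f (p, y) \<partial>bern_obs j p) * indicator {0<..<1} p \<partial>lborel)"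
proof -
  have "(\<integral>\<^sup>+x. f x \<partial>arm_law j) = (\<integral>\<^sup>+p. \<integral>\<^sup>+x. f x \<partial>K j p \<partial>U)"
    unfolding arm_law_K by (rule nn_integral_bind[OF f K_measurable])
  also have "\<dots> = (\<integral>\<^sup>+p. (\<integral>\<^sup>+y. f (p, y) \<partial>bern_obs j p) \<partial>U)"
  proof (rule nn_integral_cong)
    fix p
    have m: "(\<lambda>x. (p, x)) \<in> bern_obs j p \<rightarrow>\<^sub>M borel \<Otimes>\<^sub>M obs_space j"
      by (simp add: measurable_cong_sets[OF sets_bern_obs refl])
    show "(\<integral>\<^sup>+x. f x \<partial>K j p) = (\<integral>\<^sup>+y. f (p, y) \<partial>bern_obs j p)"
      unfolding K_def by (rule nn_integral_distr[OF m]) simp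
  qed
  also have "\<dots> = (\<integral>\<^sup>+p. (\<integral>\<^sup>+y. f (p, y) \<partial>bern_obs j p) * indicator {0<..<1} p \<partial>lborel)"
  proof -
    have mm: "(\<lambda>p. \<integral>\<^sup>+y. f (p, y) \<partial>bern_obs j p) \<in> borel_measurable lborel"
    proof -
      have "(\<lambda>p. \<integral>\<^sup>+y. f (p, y) \<partial>bern_obs j p) \<in> borel_measurable borel"
        by (rule nn_integral_measurable_subprob_algebra2[OF _ bern_obs_measurable]) simp
      then show ?thesis by simp
    qed
    show ?thesis unfolding U_def
      by (subst nn_integral_uniform_measure[OF mm]) (auto simp: divide_ennreal_def)
  qed
  finally show ?thesis .
qed

lemma arm_int:
  fixes g :: "real \<Rightarrow> real"
  assumes g[measurable]: "g \<in> borel_measurable borel" and g0: "\<And>x. g x \<ge> 0"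
    and T[measurable]: "T \<in> sets (obs_space j)"
  shows "(\<integral>y. g (fst y) * indicator T (snd y) \<partial>arm_law j) =
    (\<integral>p. indicator {0<..<1} p * (g p * measure (bern_obs j p) T) \<partial>lborel)"
proof -
  have mT[measurable]: "(\<lambda>p. measure (bern_obs j p) T) \<in> borel_measurable borel"
    by (rule measure_measurable_subprob_algebra2[OF _ bern_obs_measurable]) simp
  have m1: "(\<lambda>y. g (fst y) * indicator T (snd y)) \<in> borel_measurable (borel \<Otimes>\<^sub>M obs_space j)"
    by measurable
  have "(\<integral>y. g (fst y) * indicator T (snd y) \<partial>arm_law j) =
      enn2real (\<integral>\<^sup>+y. ennreal (g (fst y) * indicator T (snd y)) \<partial>arm_law j)"
    by (rule integral_eq_nn_integral) (auto simp: measurable_cong_sets[OF sets_arm refl] m1 g0)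
  also have "(\<integral>\<^sup>+y. ennreal (g (fst y) * indicator T (snd y)) \<partial>arm_law j) =
     (\<integral>\<^sup>+p. (\<integral>\<^sup>+y. ennreal (g p * indicator T y) \<partial>bern_obs j p) * indicator {0<..<1} p \<partial>lborel)"
    by (subst arm_nn) (auto simp: m1)
  also have "\<dots> = (\<integral>\<^sup>+p. ennreal (indicator {0<..<1} p * (g p * measure (bern_obs j p) T)) \<partial>lborel)"
  proof (rule nn_integral_cong)
    fix p
    interpret prob_space "bern_obs j p" by (rule prob_space_bern_obs)
    have "(\<integral>\<^sup>+y. ennreal (g p * indicator T y) \<partial>bern_obs j p) = ennreal (g p) * emeasure (bern_obs j p) T"
      by (subst nn_integral_cmult_indicator[symmetric]) (auto simp: sets_bern_obs ennreal_mult g0 intro!: nn_integral_cong split: split_indicator)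
    then show "(\<integral>\<^sup>+y. ennreal (g p * indicator T y) \<partial>bern_obs j p) * indicator {0<..<1} p =
       ennreal (indicator {0<..<1} p * (g p * measure (bern_obs j p) T))"
      by (auto simp: emeasure_eq_measure ennreal_mult g0 split: split_indicator)
  qed
  also have "enn2real \<dots> = (\<integral>p. indicator {0<..<1} p * (g p * measure (bern_obs j p) T) \<partial>lborel)"
    by (rule integral_eq_nn_integral[symmetric]) (measurable, auto simp: g0)
  finally show ?thesis .
qed



definition clamp :: "real \<Rightarrow> real" where "clamp q = min 1 (max 0 q)"

definition Zs :: "nat \<Rightarrow> (nat \<Rightarrow> bool) set" where "Zs j = PiE {..<j} (\<lambda>_. {False})"
definition Os :: "nat \<Rightarrow> (nat \<Rightarrow> bool) set" where "Os j = PiE {..<j} (\<lambda>_. {True})"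
definition nO :: "nat \<Rightarrow> (nat \<Rightarrow> bool) set" where "nO j = space (obs_space j) - Os j"

lemma Zs_sets[measurable]: "Zs j \<in> sets (obs_space j)"
  unfolding Zs_def obs_space_def by (rule sets_PiM_I_finite) auto
lemma Os_sets[measurable]: "Os j \<in> sets (obs_space j)"
  unfolding Os_def obs_space_def by (rule sets_PiM_I_finite) auto
lemma nO_sets[measurable]: "nO j \<in> sets (obs_space j)"
  unfolding nO_def by auto

lemma measure_bern_PiE_const:
  "measure (bern_obs j p) (PiE {..<j} (\<lambda>_. {b})) = (pmf (bernoulli_pmf p) b) ^ j"
proof -
  have "emeasure (bern_obs j p) (PiE {..<j} (\<lambda>_. {b})) = ennreal ((pmf (bernoulli_pmf p) b)^j)"
    by (subst emeasure_bern_obs_PiE) (simp add: measure_pmf_single prod_ennreal ennreal_power)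
  then show ?thesis by (simp add: measure_def)
qed

lemma measure_Zs: "measure (bern_obs j p) (Zs j) = (1 - clamp p) ^ j"
  unfolding Zs_def measure_bern_PiE_const pmf_bern_clamp clamp_def by simp

lemma measure_Os: "measure (bern_obs j p) (Os j) = (clamp p) ^ j"
  unfolding Os_def measure_bern_PiE_const pmf_bern_clamp clamp_def by simp

lemma measure_nO: "measure (bern_obs j p) (nO j) = 1 - (clamp p) ^ j"
proof -
  interpret prob_space "bern_obs j p" by (rule prob_space_bern_obs)
  show ?thesis unfolding nO_def
    by (subst prob_compl[unfolded space_bern_obs]) (auto simp: sets_bern_obs measure_Os)
qed

lemma measure_all: "measure (bern_obs j p) (space (obs_space j)) = 1"
proof -
  interpret prob_space "bern_obs j p" by (rule prob_space_bern_obs)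
  show ?thesis using prob_space space_bern_obs by simp
qed

lemma ftc_ind:
  fixes t T :: "real \<Rightarrow> real"
  assumes t: "continuous_on UNIV t" and T: "\<And>x. (T has_real_derivative t x) (at x)" and c: "0 \<le> c"
  shows "(\<integral>x. indicator {0<..<c} x * t x \<partial>lborel) = T c - T 0"
proof -
  have "(LBINT x=ereal 0..ereal c. t x) = T c - T 0"
    using c
    by (intro interval_integral_FTC_finite continuous_on_subset[OF t])
       (auto intro!: has_field_derivative_at_within T simp: has_real_derivative_iff_has_vector_derivative[symmetric])
  then show ?thesis using c
    by (subst (asm) interval_integral_Ioo) (auto simp: set_lebesgue_integral_def)
qed

lemma ind_clamp_AE:
  "AE x in lborel. indicator {0<..<1} x * (indicator {..q} x * t x) = indicator {0<..<clamp q} x * (t x::real)"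
  using AE_lborel_singleton[of q]
  by eventually_elim (auto simp: clamp_def split: split_indicator)

lemma ind01_clamp:
  "indicator {0<..<1} x * f (clamp x) = indicator {0<..<1} x * (f x :: real)"
  by (auto simp: clamp_def split: split_indicator)

lemma clamp_ge0: "0 \<le> clamp q" and clamp_le1: "clamp q \<le> 1"
  by (auto simp: clamp_def)

lemma A1:
  "(\<integral>y. indicator {..q} (fst y) * indicator (space (obs_space j)) (snd y) \<partial>arm_law j) = clamp q"
proof -
  have "(\<integral>y. indicator {..q} (fst y) * indicator (space (obs_space j)) (snd y) \<partial>arm_law j)
     = (\<integral>p. indicator {0<..<1} p * (indicator {..q} p * measure (bern_obs j p) (space (obs_space j))) \<partial>lborel)"
    by (rule arm_int) auto
  also have "\<dots> = (\<integral>p. indicator {0<..<clamp q} p * 1 \<partial>lborel)"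
    unfolding measure_all using ind_clamp_AE[of q "\<lambda>_. 1"] by (intro integral_cong_AE) auto
  also have "\<dots> = clamp q - 0"
    by (rule ftc_ind[where T="\<lambda>x. x"]) (auto intro!: derivative_eq_intros clamp_ge0)
  finally show ?thesis by simp
qed

definition Gp :: "nat \<Rightarrow> real \<Rightarrow> real" where "Gp j x = x - x ^ (j+1) / (j+1)"

lemma Gp_deriv: "(Gp j has_real_derivative (1 - x ^ j)) (at x)"
  unfolding Gp_def
  by (auto intro!: derivative_eq_intros simp del: power_Suc)

lemma A2:
  "(\<integral>y. 1 * indicator (nO j) (snd y) \<partial>arm_law j) = Gp j 1"
proof -
  have "(\<integral>y. (\<lambda>_. 1) (fst y) * indicator (nO j) (snd y) \<partial>arm_law j)
     = (\<integral>p. indicator {0<..<1} p * (1 * measure (bern_obs j p) (nO j)) \<partial>lborel)"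
    by (rule arm_int) auto
  also have "\<dots> = (\<integral>p. indicator {0<..<1} p * (1 - p ^ j) \<partial>lborel)"
    unfolding measure_nO by (rule Bochner_Integration.integral_cong) (auto simp: clamp_def split: split_indicator)
  also have "\<dots> = Gp j 1 - Gp j 0"
    by (rule ftc_ind) (auto intro!: Gp_deriv continuous_intros)
  finally show ?thesis by (simp add: Gp_def)
qed

lemma A3:
  "(\<integral>y. indicator {..q} (fst y) * indicator (nO j) (snd y) \<partial>arm_law j) = Gp j (clamp q)"
proof -
  have "(\<integral>y. indicator {..q} (fst y) * indicator (nO j) (snd y) \<partial>arm_law j)
     = (\<integral>p. indicator {0<..<1} p * (indicator {..q} p * measure (bern_obs j p) (nO j)) \<partial>lborel)"
    by (rule arm_int) auto
  also have "\<dots> = (\<integral>p. indicator {0<..<1} p * (indicator {..q} p * (1 - p ^ j)) \<partial>lborel)"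
    unfolding measure_nO by (rule Bochner_Integration.integral_cong) (auto simp: clamp_def split: split_indicator)
  also have "\<dots> = (\<integral>p. indicator {0<..<clamp q} p * (1 - p ^ j) \<partial>lborel)"
    by (rule integral_cong_AE[OF _ _ ind_clamp_AE]) auto
  also have "\<dots> = Gp j (clamp q) - Gp j 0"
    by (rule ftc_ind) (auto intro!: Gp_deriv continuous_intros clamp_ge0)
  finally show ?thesis by (simp add: Gp_def)
qed

lemma A4:
  fixes g :: "real \<Rightarrow> real"
  assumes g[measurable]: "g \<in> borel_measurable borel" and g0: "\<And>x. g x \<ge> 0"
  shows "(\<integral>y. g (fst y) * indicator (Zs j) (snd y) \<partial>arm_law j) =
    (\<integral>p. indicator {0<..<1} p * (g p * (1 - p) ^ j) \<partial>lborel)"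
proof -
  have "(\<integral>y. g (fst y) * indicator (Zs j) (snd y) \<partial>arm_law j)
     = (\<integral>p. indicator {0<..<1} p * (g p * measure (bern_obs j p) (Zs j)) \<partial>lborel)"
    by (rule arm_int) (auto simp: g0)
  also have "\<dots> = (\<integral>p. indicator {0<..<1} p * (g p * (1 - p) ^ j) \<partial>lborel)"
    unfolding measure_Zs by (rule Bochner_Integration.integral_cong) (auto simp: clamp_def split: split_indicator)
  finally show ?thesis .
qed



definition Bev :: "nat \<Rightarrow> nat \<Rightarrow> nat \<Rightarrow> (nat \<Rightarrow> real \<times> (nat \<Rightarrow> bool)) \<Rightarrow> bool" where
  "Bev n j i \<omega> = ((\<exists>l<n. fst (\<omega> i) < fst (\<omega> l)) \<and> (\<forall>k<j. \<not> snd (\<omega> i) k) \<and>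
      (\<exists>l<n. l \<noteq> i \<and> (\<forall>k<j. snd (\<omega> l) k)))"

lemma fst_arm_meas[measurable]: "fst \<in> arm_law j \<rightarrow>\<^sub>M borel"
  by (simp add: measurable_cong_sets[OF sets_arm refl])

lemma snd_arm_meas: "k < j \<Longrightarrow> (\<lambda>y. snd y k) \<in> arm_law j \<rightarrow>\<^sub>M count_space UNIV"
proof -
  assume k: "k < j"
  have "snd \<in> arm_law j \<rightarrow>\<^sub>M obs_space j"
    by (simp add: measurable_cong_sets[OF sets_arm refl])
  moreover have "(\<lambda>x. x k) \<in> obs_space j \<rightarrow>\<^sub>M count_space UNIV"
    unfolding obs_space_def using k by (intro measurable_component_singleton) auto
  ultimately show ?thesis by (rule measurable_compose)
qed

lemma fst_PiM_meas[measurable]: "l < n \<Longrightarrow> (\<lambda>\<omega>. fst (\<omega> l)) \<in> borel_measurable (PiM {..<n} (\<lambda>_. arm_law j))"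
proof -
  assume "l < n"
  then have "(\<lambda>\<omega>. \<omega> l) \<in> PiM {..<n} (\<lambda>_. arm_law j) \<rightarrow>\<^sub>M arm_law j"
    using measurable_component_singleton[of l "{..<n}" "\<lambda>_. arm_law j"] by simp
  from measurable_compose[OF this fst_arm_meas] show ?thesis .
qed

lemma snd_PiM_meas[measurable]: "l < n \<Longrightarrow> k < j \<Longrightarrow> (\<lambda>\<omega>. snd (\<omega> l) k) \<in> PiM {..<n} (\<lambda>_. arm_law j) \<rightarrow>\<^sub>M count_space UNIV"
proof -
  assume "l < n" "k < j"
  then have "(\<lambda>\<omega>. \<omega> l) \<in> PiM {..<n} (\<lambda>_. arm_law j) \<rightarrow>\<^sub>M arm_law j"
    using measurable_component_singleton[of l "{..<n}" "\<lambda>_. arm_law j"] by simp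
  from measurable_compose[OF this snd_arm_meas[OF \<open>k < j\<close>]] show ?thesis .
qed

lemma Bev_meas: "i < n \<Longrightarrow> Measurable.pred (PiM {..<n} (\<lambda>_. arm_law j)) (Bev n j i)"
  unfolding Bev_def by measurable

lemma succ_le: "succ j \<omega> l \<le> j"
proof -
  have "succ j \<omega> l \<le> card {..<j}" unfolding succ_def by (rule card_mono) auto
  then show ?thesis by simp
qed

lemma succ_eq_j: "succ j \<omega> l = j \<longleftrightarrow> (\<forall>k<j. snd (\<omega> l) k)"
proof
  assume h: "succ j \<omega> l = j"
  have "{k \<in> {..<j}. snd (\<omega> l) k} = {..<j}"
    by (rule card_subset_eq) (use h in \<open>auto simp: succ_def\<close>)
  then show "\<forall>k<j. snd (\<omega> l) k" by auto
next
  assume "\<forall>k<j. snd (\<omega> l) k"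
  then have "{k \<in> {..<j}. snd (\<omega> l) k} = {..<j}" by auto
  then show "succ j \<omega> l = j" unfolding succ_def by simp
qed

lemma succ_eq_0: "succ j \<omega> l = 0 \<longleftrightarrow> (\<forall>k<j. \<not> snd (\<omega> l) k)"
  unfolding succ_def by auto

lemma Max_succ:
  assumes "n \<ge> 2" "i < n"
  shows "Max {succ j \<omega> l | l. l < n \<and> l \<noteq> i} = j \<longleftrightarrow> (\<exists>l<n. l \<noteq> i \<and> (\<forall>k<j. snd (\<omega> l) k))"
proof -
  let ?S = "{succ j \<omega> l | l. l < n \<and> l \<noteq> i}"
  have fin: "finite ?S" by simp
  have ne: "?S \<noteq> {}"
  proof -
    have "(if i = 0 then 1 else 0) < n \<and> (if i = 0 then 1 else 0) \<noteq> i" using assms by auto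
    then show ?thesis by blast
  qed
  have le: "\<forall>x\<in>?S. x \<le> j" using succ_le by auto
  have "Max ?S = j \<longleftrightarrow> j \<in> ?S"
  proof
    assume "Max ?S = j" then show "j \<in> ?S" using Max_in[OF fin ne] by simp
  next
    assume "j \<in> ?S"
    then have "j \<le> Max ?S" by (rule Max_ge[OF fin])
    moreover have "Max ?S \<le> j" using le Max_in[OF fin ne] by blast
    ultimately show "Max ?S = j" by simp
  qed
  also have "\<dots> \<longleftrightarrow> (\<exists>l<n. l \<noteq> i \<and> (\<forall>k<j. snd (\<omega> l) k))"
  proof -
    have "j \<in> ?S \<longleftrightarrow> (\<exists>l. l < n \<and> l \<noteq> i \<and> succ j \<omega> l = j)" by (auto intro: sym)
    then show ?thesis by (simp add: succ_eq_j)
  qed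
  finally show ?thesis .
qed

lemma Nstar_Bev:
  assumes "n \<ge> 2"
  shows "real (Nstar n j \<omega>) = (\<Sum>i<n. indicator {\<omega>. Bev n j i \<omega>} \<omega>)"
proof -
  have "{i \<in> {..<n}. (\<exists>l<n. fst (\<omega> l) > fst (\<omega> i)) \<and> succ j \<omega> i = 0 \<and>
      Max {succ j \<omega> l | l. l < n \<and> l \<noteq> i} = j} = {i \<in> {..<n}. Bev n j i \<omega>}"
    by (intro Collect_cong) (auto simp: Bev_def succ_eq_0 Max_succ[OF assms])
  then have "real (Nstar n j \<omega>) = real (card {i \<in> {..<n}. Bev n j i \<omega>})" unfolding Nstar_def by simp
  also have "\<dots> = (\<Sum>i\<in>{i \<in> {..<n}. Bev n j i \<omega>}. 1)" by (rule real_of_card)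
  also have "\<dots> = (\<Sum>i<n. if Bev n j i \<omega> then 1 else 0)"
    by (rule sum.inter_filter) simp
  also have "\<dots> = (\<Sum>i<n. indicator {\<omega>. Bev n j i \<omega>} \<omega>)"
    by (rule sum.cong) (auto simp: indicator_def)
  finally show ?thesis .
qed



lemma space_arm': "space (arm_law j) = UNIV \<times> space (obs_space j)"
  unfolding space_arm by (simp add: space_pair_measure)

lemma prod_ind01: "finite J \<Longrightarrow> (\<Prod>l\<in>J. (if P l then 1 else 0::real)) = (if \<forall>l\<in>J. P l then 1 else 0)"
  by (induction J rule: finite_induct) auto

lemma arm_bounded_integrable:
  assumes "f \<in> borel_measurable (borel \<Otimes>\<^sub>M obs_space j)" "\<And>x. \<bar>f x\<bar> \<le> 1"
  shows "integrable (arm_law j) (f :: _ \<Rightarrow> real)"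
proof -
  interpret prob_space "arm_law j" by (rule prob_space_arm)
  show ?thesis
    by (rule integrable_const_bound[where B=1]) (use assms in \<open>auto simp: measurable_cong_sets[OF sets_arm refl]\<close>)
qed

definition Hq :: "nat \<Rightarrow> nat \<Rightarrow> real \<Rightarrow> real" where
  "Hq m j q = 1 - q ^ m - (Gp j 1) ^ m + (Gp j q) ^ m"

lemma inner:
  assumes J: "finite J" and a: "a \<in> space (arm_law j)"
  shows "(\<integral>y. (if (\<exists>l\<in>J. fst a < fst (y l)) \<and> (\<forall>k<j. \<not> snd a k) \<and> (\<exists>l\<in>J. \<forall>k<j. snd (y l) k) then 1 else 0)
      \<partial>PiM J (\<lambda>_. arm_law j)) = indicator (Zs j) (snd a) * Hq (card J) j (clamp (fst a))"
proof -
  interpret PP: product_prob_space "\<lambda>_. arm_law j" "UNIV"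
    by (intro product_prob_spaceI prob_space_arm)
  interpret PJ: prob_space "PiM J (\<lambda>_. arm_law j)" by (intro prob_space_PiM prob_space_arm)
  define q where "q = fst a"
  define f1 where "f1 = (\<lambda>z::real \<times> (nat \<Rightarrow> bool). indicator {..q} (fst z) * indicator (space (obs_space j)) (snd z) :: real)"
  define f2 where "f2 = (\<lambda>z::real \<times> (nat \<Rightarrow> bool). 1 * indicator (nO j) (snd z) :: real)"
  define f3 where "f3 = (\<lambda>z::real \<times> (nat \<Rightarrow> bool). indicator {..q} (fst z) * indicator (nO j) (snd z) :: real)"
  have f1m: "f1 \<in> borel_measurable (borel \<Otimes>\<^sub>M obs_space j)" unfolding f1_def by measurable
  have f2m: "f2 \<in> borel_measurable (borel \<Otimes>\<^sub>M obs_space j)" unfolding f2_def by measurable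
  have f3m: "f3 \<in> borel_measurable (borel \<Otimes>\<^sub>M obs_space j)" unfolding f3_def by measurable
  have i1: "integrable (arm_law j) f1" by (rule arm_bounded_integrable[OF f1m]) (auto simp: f1_def split: split_indicator)
  have i2: "integrable (arm_law j) f2" by (rule arm_bounded_integrable[OF f2m]) (auto simp: f2_def split: split_indicator)
  have i3: "integrable (arm_law j) f3" by (rule arm_bounded_integrable[OF f3m]) (auto simp: f3_def split: split_indicator)
  have e1: "f1 z = (if fst z \<le> q then 1 else 0)" if "z \<in> space (arm_law j)" for z
    using that unfolding f1_def space_arm' by (auto split: split_indicator)
  have e2: "f2 z = (if \<not> (\<forall>k<j. snd z k) then 1 else 0)" if "z \<in> space (arm_law j)" for z
  proof -
    have sz: "snd z \<in> PiE {..<j} (\<lambda>_. UNIV)" using that by (simp add: space_arm mem_Times_iff space_pair_measure space_obs_space)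
    then have "snd z \<in> Os j \<longleftrightarrow> (\<forall>k<j. snd z k)" unfolding Os_def PiE_iff by auto
    then show ?thesis using sz unfolding f2_def nO_def space_obs_space indicator_def by simp
  qed
  have e3: "f3 z = (if fst z \<le> q \<and> \<not> (\<forall>k<j. snd z k) then 1 else 0)" if "z \<in> space (arm_law j)" for z
    using e1[OF that] e2[OF that] unfolding f1_def f2_def f3_def by (auto split: split_indicator if_splits)
  have eZ: "indicator (Zs j) (snd a) = (if \<forall>k<j. \<not> snd a k then 1 else (0::real))"
  proof -
    have sz: "snd a \<in> PiE {..<j} (\<lambda>_. UNIV)" using a by (simp add: space_arm mem_Times_iff space_pair_measure space_obs_space)
    then have "snd a \<in> Zs j \<longleftrightarrow> (\<forall>k<j. \<not> snd a k)" unfolding Zs_def PiE_iff by auto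
    then show ?thesis unfolding indicator_def by simp
  qed
  have "(\<integral>y. (if (\<exists>l\<in>J. fst a < fst (y l)) \<and> (\<forall>k<j. \<not> snd a k) \<and> (\<exists>l\<in>J. \<forall>k<j. snd (y l) k) then 1 else 0)
      \<partial>PiM J (\<lambda>_. arm_law j)) =
      (\<integral>y. indicator (Zs j) (snd a) * (1 - (\<Prod>l\<in>J. f1 (y l)) - (\<Prod>l\<in>J. f2 (y l)) + (\<Prod>l\<in>J. f3 (y l)))
      \<partial>PiM J (\<lambda>_. arm_law j))"
  proof (rule Bochner_Integration.integral_cong[OF refl])
    fix y assume y: "y \<in> space (PiM J (\<lambda>_. arm_law j))"
    then have yl: "y l \<in> space (arm_law j)" if "l \<in> J" for l using that by (auto simp: space_PiM)
    have p1: "(\<Prod>l\<in>J. f1 (y l)) = (if \<forall>l\<in>J. fst (y l) \<le> q then 1 else 0)"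
    proof -
      have "(\<Prod>l\<in>J. f1 (y l)) = (\<Prod>l\<in>J. (if fst (y l) \<le> q then 1 else 0))" by (rule prod.cong[OF refl], rule e1[OF yl])
      then show ?thesis by (simp only: prod_ind01[OF J])
    qed
    have p2: "(\<Prod>l\<in>J. f2 (y l)) = (if \<forall>l\<in>J. \<not> (\<forall>k<j. snd (y l) k) then 1 else 0)"
    proof -
      have "(\<Prod>l\<in>J. f2 (y l)) = (\<Prod>l\<in>J. (if \<not> (\<forall>k<j. snd (y l) k) then 1 else 0))" by (rule prod.cong[OF refl], rule e2[OF yl])
      then show ?thesis by (simp only: prod_ind01[OF J])
    qed
    have p3: "(\<Prod>l\<in>J. f3 (y l)) = (if \<forall>l\<in>J. fst (y l) \<le> q \<and> \<not> (\<forall>k<j. snd (y l) k) then 1 else 0)"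
    proof -
      have "(\<Prod>l\<in>J. f3 (y l)) = (\<Prod>l\<in>J. (if fst (y l) \<le> q \<and> \<not> (\<forall>k<j. snd (y l) k) then 1 else 0))" by (rule prod.cong[OF refl], rule e3[OF yl])
      then show ?thesis by (simp only: prod_ind01[OF J])
    qed
    show "(if (\<exists>l\<in>J. fst a < fst (y l)) \<and> (\<forall>k<j. \<not> snd a k) \<and> (\<exists>l\<in>J. \<forall>k<j. snd (y l) k) then 1 else 0) =
      indicator (Zs j) (snd a) * (1 - (\<Prod>l\<in>J. f1 (y l)) - (\<Prod>l\<in>J. f2 (y l)) + (\<Prod>l\<in>J. f3 (y l)))"
      unfolding p1 p2 p3 eZ q_def by (auto simp: not_less)
  qed
  also have "\<dots> = indicator (Zs j) (snd a) * (1 - (\<integral>y. (\<Prod>l\<in>J. f1 (y l)) \<partial>PiM J (\<lambda>_. arm_law j))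
       - (\<integral>y. (\<Prod>l\<in>J. f2 (y l)) \<partial>PiM J (\<lambda>_. arm_law j)) + (\<integral>y. (\<Prod>l\<in>J. f3 (y l)) \<partial>PiM J (\<lambda>_. arm_law j)))"
  proof -
    have I1: "integrable (PiM J (\<lambda>_. arm_law j)) (\<lambda>y. \<Prod>l\<in>J. f1 (y l))"
      by (rule PP.product_integrable_prod[OF J]) (rule i1)
    have I2: "integrable (PiM J (\<lambda>_. arm_law j)) (\<lambda>y. \<Prod>l\<in>J. f2 (y l))"
      by (rule PP.product_integrable_prod[OF J]) (rule i2)
    have I3: "integrable (PiM J (\<lambda>_. arm_law j)) (\<lambda>y. \<Prod>l\<in>J. f3 (y l))"
      by (rule PP.product_integrable_prod[OF J]) (rule i3)
    show ?thesis
      using I1 I2 I3 by (simp add: integral_diff integral_add PJ.prob_space)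
  qed
  also have "\<dots> = indicator (Zs j) (snd a) * Hq (card J) j (clamp (fst a))"
  proof -
    have "(\<integral>y. (\<Prod>l\<in>J. f1 (y l)) \<partial>PiM J (\<lambda>_. arm_law j)) = (clamp q) ^ card J"
      using PP.product_integral_prod[OF J, of "\<lambda>_. f1"] i1 A1[where q=q and j=j] by (simp add: f1_def)
    moreover have "(\<integral>y. (\<Prod>l\<in>J. f2 (y l)) \<partial>PiM J (\<lambda>_. arm_law j)) = (Gp j 1) ^ card J"
      using PP.product_integral_prod[OF J, of "\<lambda>_. f2"] i2 A2[where j=j] by (simp add: f2_def)
    moreover have "(\<integral>y. (\<Prod>l\<in>J. f3 (y l)) \<partial>PiM J (\<lambda>_. arm_law j)) = (Gp j (clamp q)) ^ card J"
      using PP.product_integral_prod[OF J, of "\<lambda>_. f3"] i3 A3[where q=q and j=j] by (simp add: f3_def)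
    ultimately show ?thesis unfolding Hq_def q_def by simp
  qed
  finally show ?thesis .
qed



lemma Hq_clamp_nonneg: "Hq m j (clamp q) \<ge> 0"
proof -
  define J :: "nat set" where "J = {..<m}"
  define a :: "real \<times> (nat \<Rightarrow> bool)" where "a = (q, \<lambda>k\<in>{..<j}. False)"
  have a: "a \<in> space (arm_law j)"
    unfolding a_def by (simp add: space_arm space_pair_measure space_obs_space)
  have z: "snd a \<in> Zs j" unfolding a_def Zs_def by auto
  have "Hq m j (clamp q) = indicator (Zs j) (snd a) * Hq (card J) j (clamp (fst a))"
    using z by (simp add: J_def a_def)
  also have "\<dots> = (\<integral>y. (if (\<exists>l\<in>J. fst a < fst (y l)) \<and> (\<forall>k<j. \<not> snd a k) \<and> (\<exists>l\<in>J. \<forall>k<j. snd (y l) k) then 1 else 0)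
      \<partial>PiM J (\<lambda>_. arm_law j))"
    by (rule inner[symmetric]) (auto simp: J_def a)
  also have "\<dots> \<ge> 0" by (rule Bochner_Integration.integral_nonneg) auto
  finally show ?thesis .
qed

lemma Bev_meas'[measurable]: "i < n \<Longrightarrow> Measurable.pred (PiM {..<n} (\<lambda>_. arm_law j)) (Bev n j i)"
  by (rule Bev_meas)

lemma P_Bev:
  assumes n: "n \<ge> 2" and i: "i < n"
  shows "(\<integral>\<omega>. indicator {\<omega>. Bev n j i \<omega>} \<omega> \<partial>bandit_law n j) =
     (\<integral>p. indicator {0<..<1} p * (Hq (n - 1) j p * (1 - p) ^ j) \<partial>lborel)"
proof -
  define J where "J = {..<n} - {i}"
  have U: "{..<n} = {i} \<union> J" using i by (auto simp: J_def)
  have dis: "{i} \<inter> J = {}" by (auto simp: J_def)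
  have fJ: "finite J" by (simp add: J_def)
  have cJ: "card J = n - 1" using i by (simp add: J_def)
  interpret PP: product_prob_space "\<lambda>_. arm_law j" "UNIV"
    by (intro product_prob_spaceI prob_space_arm)
  interpret PN: prob_space "PiM {..<n} (\<lambda>_. arm_law j)" by (intro prob_space_PiM prob_space_arm)
  define f where "f = (\<lambda>\<omega>. if Bev n j i \<omega> then 1 else (0::real))"
  have fm: "f \<in> borel_measurable (PiM {..<n} (\<lambda>_. arm_law j))"
    unfolding f_def
    by (rule measurable_If[OF measurable_const measurable_const]) (auto simp: Bev_meas[OF i, unfolded pred_def])
  have fi: "integrable (PiM {..<n} (\<lambda>_. arm_law j)) f"
    using fm by (intro PN.integrable_const_bound[where B=1]) (auto simp: f_def)
  have "(\<integral>\<omega>. indicator {\<omega>. Bev n j i \<omega>} \<omega> \<partial>bandit_law n j) = (\<integral>\<omega>. f \<omega> \<partial>PiM ({i} \<union> J) (\<lambda>_. arm_law j))"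
    unfolding bandit_law_def U[symmetric] f_def by (simp add: indicator_def of_bool_def)
  also have "\<dots> = (\<integral>x. (\<integral>y. f (merge {i} J (x, y)) \<partial>PiM J (\<lambda>_. arm_law j)) \<partial>PiM {i} (\<lambda>_. arm_law j))"
    by (rule PP.product_integral_fold[OF dis]) (use fi U fJ in auto)
  also have "\<dots> = (\<integral>x. (\<lambda>a. Hq (n - 1) j (clamp (fst a)) * indicator (Zs j) (snd a)) (x i) \<partial>PiM {i} (\<lambda>_. arm_law j))"
  proof (rule Bochner_Integration.integral_cong[OF refl])
    fix x assume x: "x \<in> space (PiM {i} (\<lambda>_. arm_law j))"
    then have xi: "x i \<in> space (arm_law j)" by (auto simp: space_PiM)
    have "(\<integral>y. f (merge {i} J (x, y)) \<partial>PiM J (\<lambda>_. arm_law j)) =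
      (\<integral>y. (if (\<exists>l\<in>J. fst (x i) < fst (y l)) \<and> (\<forall>k<j. \<not> snd (x i) k) \<and> (\<exists>l\<in>J. \<forall>k<j. snd (y l) k) then 1 else 0)
      \<partial>PiM J (\<lambda>_. arm_law j))"
    proof (rule Bochner_Integration.integral_cong[OF refl])
      fix y
      have "Bev n j i (merge {i} J (x, y)) \<longleftrightarrow>
        (\<exists>l\<in>J. fst (x i) < fst (y l)) \<and> (\<forall>k<j. \<not> snd (x i) k) \<and> (\<exists>l\<in>J. \<forall>k<j. snd (y l) k)"
        unfolding Bev_def merge_def J_def
        by (auto; metis less_irrefl)
      then show "f (merge {i} J (x, y)) = (if (\<exists>l\<in>J. fst (x i) < fst (y l)) \<and> (\<forall>k<j. \<not> snd (x i) k) \<and> (\<exists>l\<in>J. \<forall>k<j. snd (y l) k) then 1 else 0)"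
        unfolding f_def by simp
    qed
    also have "\<dots> = indicator (Zs j) (snd (x i)) * Hq (card J) j (clamp (fst (x i)))"
      by (rule inner[OF fJ xi])
    finally show "(\<integral>y. f (merge {i} J (x, y)) \<partial>PiM J (\<lambda>_. arm_law j)) =
      (\<lambda>a. Hq (n - 1) j (clamp (fst a)) * indicator (Zs j) (snd a)) (x i)"
      by (simp add: cJ)
  qed
  also have "\<dots> = (\<integral>a. Hq (n - 1) j (clamp (fst a)) * indicator (Zs j) (snd a) \<partial>arm_law j)"
    by (rule PP.product_integral_singleton)
       (simp add: measurable_cong_sets[OF sets_arm refl] Hq_def Gp_def clamp_def)
  also have "\<dots> = (\<integral>p. indicator {0<..<1} p * (Hq (n - 1) j (clamp p) * (1 - p) ^ j) \<partial>lborel)"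
    by (rule A4) (simp add: Hq_def Gp_def clamp_def, rule Hq_clamp_nonneg)
  also have "\<dots> = (\<integral>p. indicator {0<..<1} p * (Hq (n - 1) j p * (1 - p) ^ j) \<partial>lborel)"
    by (rule Bochner_Integration.integral_cong) (auto simp: clamp_def split: split_indicator)
  finally show ?thesis .
qed



definition Qf :: "nat \<Rightarrow> nat \<Rightarrow> real \<Rightarrow> real" where
  "Qf n j w = 1 - (1 - w ^ j) * (1 - w ^ j / real (j + 1)) ^ (n - 2)"

definition Pf :: "nat \<Rightarrow> real \<Rightarrow> real" where
  "Pf j w = (\<Sum>i<j+1. (1 - w) ^ i)"

definition Rp :: "nat \<Rightarrow> nat \<Rightarrow> real \<Rightarrow> real" where
  "Rp n j w = Pf j w / real (j + 1) * Qf n j w"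

lemma Pf_eq: "1 - (1 - w) ^ (j + 1) = w * Pf j w"
  unfolding Pf_def using one_diff_power_eq[of "1 - w" "j+1"] by simp

lemma Rp_cont: "continuous_on UNIV (Rp n j)"
  unfolding Rp_def Pf_def Qf_def by (intro continuous_intros) auto

lemma uniform01: "uniform_measure lborel {0<..<1::real} = density lborel (\<lambda>x. ennreal (indicator {0<..<1} x))"
  unfolding uniform_measure_def by (simp add: divide_ennreal_def ennreal_indicator)

lemma Dconst_eq1:
  assumes n: "n \<ge> 1"
  shows "Dconst n j = (\<integral>u. indicator {0<..<1} u * Rp n j (root n u) \<partial>lborel)"
proof -
  have "Dconst n j = (\<integral>u. indicator {0<..<1} u *\<^sub>R (let w = u powr (1 / real n) in
      (1 - (1 - w) ^ (j + 1)) / (real (j + 1) * w) *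
      (1 - (1 - w ^ j) * (1 - w ^ j / real (j + 1)) ^ (n - 2))) \<partial>lborel)"
    unfolding Dconst_def uniform01
    by (rule integral_density) (auto simp: Let_def)
  also have "\<dots> = (\<integral>u. indicator {0<..<1} u * Rp n j (root n u) \<partial>lborel)"
  proof (rule Bochner_Integration.integral_cong[OF refl])
    fix u :: real
    show "indicator {0<..<1} u *\<^sub>R (let w = u powr (1 / real n) in
      (1 - (1 - w) ^ (j + 1)) / (real (j + 1) * w) *
      (1 - (1 - w ^ j) * (1 - w ^ j / real (j + 1)) ^ (n - 2))) = indicator {0<..<1} u * Rp n j (root n u)"
    proof (cases "u \<in> {0<..<1}")
      case True
      then have w: "root n u = u powr (1 / real n)" "root n u > 0" using n by (auto simp: root_powr_inverse)
      show ?thesis using True w unfolding Let_def Rp_def Qf_def Pf_eq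
        by (simp add: w(1)[symmetric])
    qed simp
  qed
  finally show ?thesis .
qed

lemma Dconst_eq2:
  assumes n: "n \<ge> 1"
  shows "Dconst n j = (\<integral>w. indicator {0<..<1} w * (real n * w ^ (n - 1) * Rp n j w) \<partial>lborel)"
proof -
  have "(LBINT x=ereal 0..ereal 1. (real n * x ^ (n - 1)) *\<^sub>R (\<lambda>u. Rp n j (root n u)) (x ^ n)) =
      (LBINT y=ereal (0 ^ n)..ereal (1 ^ n). (\<lambda>u. Rp n j (root n u)) y)"
  proof (rule interval_integral_substitution_finite)
    show "continuous_on ((\<lambda>x. x ^ n) ` {0..1}) (\<lambda>u. Rp n j (root n u))"
      by (rule continuous_on_subset[of UNIV]) (auto intro!: continuous_on_compose2[OF Rp_cont] continuous_intros)
    fix x :: real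
    show "((\<lambda>x. x ^ n) has_real_derivative real n * x ^ (n - 1)) (at x within {0..1})"
      by (auto intro!: derivative_eq_intros)
  qed (auto intro!: continuous_intros)
  then have "(LBINT x=ereal 0..ereal 1. (real n * x ^ (n - 1)) * Rp n j (root n (x ^ n))) =
      (LBINT y=ereal 0..ereal 1. Rp n j (root n y))" using n by (simp add: power_0_left)
  then have eq: "(\<integral>x. indicator {0<..<1} x * ((real n * x ^ (n - 1)) * Rp n j (root n (x ^ n))) \<partial>lborel) =
      (\<integral>y. indicator {0<..<1} y * Rp n j (root n y) \<partial>lborel)"
    by (simp add: interval_integral_Ioo set_lebesgue_integral_def)
  have "(\<integral>x. indicator {0<..<1} x * ((real n * x ^ (n - 1)) * Rp n j (root n (x ^ n))) \<partial>lborel)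
     = (\<integral>w. indicator {0<..<1} w * (real n * w ^ (n - 1) * Rp n j w) \<partial>lborel)"
    by (rule Bochner_Integration.integral_cong) (use n in \<open>auto simp: real_root_power_cancel split: split_indicator\<close>)
  then show ?thesis using eq Dconst_eq1[OF n] by simp
qed



definition Fp :: "nat \<Rightarrow> real \<Rightarrow> real" where
  "Fp j w = (1 - (1 - w) ^ (j + 1)) / real (j + 1)"

lemma Fp_deriv: "(Fp j has_real_derivative (1 - w) ^ j) (at w)"
  unfolding Fp_def
  by (auto intro!: derivative_eq_intros simp del: power_Suc)

definition Mf :: "nat \<Rightarrow> nat \<Rightarrow> real \<Rightarrow> real" where
  "Mf m j w = - (1 - Gp j 1 ^ (m + 1)) * ((1 - w) ^ (j + 1) / real (j + 1)) - Fp j w * (w ^ (m + 1) - Gp j w ^ (m + 1))"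

lemma Mf_deriv: "(Mf m j has_real_derivative
   (1 - Gp j 1 ^ (m + 1)) * (1 - w) ^ j - ((1 - w) ^ j * (w ^ (m + 1) - Gp j w ^ (m + 1)) +
     Fp j w * (real (m + 1) * w ^ m - real (m + 1) * Gp j w ^ m * (1 - w ^ j)))) (at w)"
  unfolding Mf_def
  apply (auto intro!: derivative_eq_intros Fp_deriv Gp_deriv simp del: power_Suc)
  apply (simp add: algebra_simps)
  done

lemma Gp_mult: "Gp j w = w * (1 - w ^ j / real (j + 1))"
  unfolding Gp_def by (simp add: algebra_simps)

lemma Mf_deriv_eq:
  "(1 - Gp j 1 ^ (m + 1)) * (1 - w) ^ j - ((1 - w) ^ j * (w ^ (m + 1) - Gp j w ^ (m + 1)) +
     Fp j w * (real (m + 1) * w ^ m - real (m + 1) * Gp j w ^ m * (1 - w ^ j)))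
   = Hq (m + 1) j w * (1 - w) ^ j - real (m + 1) * w ^ m * Fp j w * Qf (m + 2) j w"
proof -
  have Gm: "Gp j w ^ m = w ^ m * (1 - w ^ j / real (j + 1)) ^ m"
    unfolding Gp_mult by (simp add: power_mult_distrib)
  show ?thesis unfolding Hq_def Qf_def Gm by (simp add: algebra_simps)
qed



lemma int01:
  fixes f :: "real \<Rightarrow> real"
  assumes "continuous_on UNIV f"
  shows "integrable lborel (\<lambda>x. indicator {0<..<1} x * f x)"
proof -
  have "set_integrable lborel {0..1} f"
    by (rule borel_integrable_atLeastAtMost') (rule continuous_on_subset[OF assms], auto)
  then have "set_integrable lborel {0<..<1} f"
    by (rule set_integrable_subset) auto
  then show ?thesis by (simp add: set_integrable_def)
qed

lemma key:
  "(\<integral>w. indicator {0<..<1} w * (Hq (m + 1) j w * (1 - w) ^ j) \<partial>lborel) =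
   (\<integral>w. indicator {0<..<1} w * (real (m + 1) * w ^ m * Fp j w * Qf (m + 2) j w) \<partial>lborel)"
proof -
  define a where "a = (\<lambda>w. Hq (m + 1) j w * (1 - w) ^ j)"
  define b where "b = (\<lambda>w. real (m + 1) * w ^ m * Fp j w * Qf (m + 2) j w)"
  have ca: "continuous_on UNIV a" unfolding a_def Hq_def Gp_def by (intro continuous_intros) auto
  have cb: "continuous_on UNIV b" unfolding b_def Fp_def Qf_def by (intro continuous_intros) auto
  have ia: "integrable lborel (\<lambda>x. indicator {0<..<1} x * a x)" by (rule int01[OF ca])
  have ib: "integrable lborel (\<lambda>x. indicator {0<..<1} x * b x)" by (rule int01[OF cb])
  have "(\<integral>w. indicator {0<..<1} w * a w \<partial>lborel) - (\<integral>w. indicator {0<..<1} w * b w \<partial>lborel)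
     = (\<integral>w. indicator {0<..<1} w * (a w - b w) \<partial>lborel)"
    using ia ib by (simp add: integral_diff[symmetric] right_diff_distrib)
  also have "\<dots> = Mf m j 1 - Mf m j 0"
  proof (rule ftc_ind)
    show "continuous_on UNIV (\<lambda>w. a w - b w)" using ca cb by (intro continuous_intros)
    fix x show "(Mf m j has_real_derivative a x - b x) (at x)"
      using Mf_deriv[of m j x] unfolding Mf_deriv_eq a_def b_def .
  qed simp
  also have "\<dots> = 0" unfolding Mf_def Fp_def by (simp add: power_0_left field_simps)
  finally show ?thesis unfolding a_def b_def by simp
qed

lemma Bev_integrable: "i < n \<Longrightarrow> integrable (bandit_law n j) (\<lambda>\<omega>. indicator {\<omega>. Bev n j i \<omega>} \<omega> :: real)"
proof -
  assume i: "i < n"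
  interpret PN: prob_space "PiM {..<n} (\<lambda>_. arm_law j)" by (intro prob_space_PiM prob_space_arm)
  have fm: "(\<lambda>\<omega>. if Bev n j i \<omega> then 1 else (0::real)) \<in> borel_measurable (PiM {..<n} (\<lambda>_. arm_law j))"
    by (rule measurable_If[OF measurable_const measurable_const]) (auto simp: Bev_meas[OF i, unfolded pred_def])
  have "integrable (PiM {..<n} (\<lambda>_. arm_law j)) (\<lambda>\<omega>. if Bev n j i \<omega> then 1 else (0::real))"
    using fm by (intro PN.integrable_const_bound[where B=1]) auto
  then show ?thesis unfolding bandit_law_def by (simp add: indicator_def of_bool_def)
qed

theorem mainTheorem11:
  fixes n j :: nat
  assumes "n \<ge> 2" and "j \<ge> 1"
  shows "(\<integral>\<omega>. real (Nstar n j \<omega>) \<partial>(bandit_law n j)) = real (n - 1) * Dconst n j"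
proof -
  obtain m where nm: "n = m + 2" using assms(1) by (metis add.commute le_Suc_ex)
  have "(\<integral>\<omega>. real (Nstar n j \<omega>) \<partial>(bandit_law n j)) = (\<integral>\<omega>. (\<Sum>i<n. indicator {\<omega>. Bev n j i \<omega>} \<omega>) \<partial>(bandit_law n j))"
    by (rule Bochner_Integration.integral_cong[OF refl]) (rule Nstar_Bev[OF assms(1)])
  also have "\<dots> = (\<Sum>i<n. (\<integral>\<omega>. indicator {\<omega>. Bev n j i \<omega>} \<omega> \<partial>(bandit_law n j)))"
    by (rule Bochner_Integration.integral_sum) (auto intro: Bev_integrable)
  also have "\<dots> = (\<Sum>i<n. (\<integral>p. indicator {0<..<1} p * (Hq (n - 1) j p * (1 - p) ^ j) \<partial>lborel))"
    by (rule sum.cong[OF refl]) (rule P_Bev[OF assms(1)], simp)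
  also have "\<dots> = real n * (\<integral>w. indicator {0<..<1} w * (real (m + 1) * w ^ m * Fp j w * Qf (m + 2) j w) \<partial>lborel)"
    using key[of m j] by (simp add: nm)
  also have "\<dots> = real (n - 1) * (\<integral>w. indicator {0<..<1} w * (real n * w ^ (n - 1) * Rp n j w) \<partial>lborel)"
  proof -
    have "\<And>w. indicator {0<..<1} w * (real n * w ^ (n - 1) * Rp n j w) =
         real n * (indicator {0<..<1} w * (w ^ m * Fp j w * Qf (m + 2) j w))"
    proof -
      fix w :: real
      have "w ^ (n - 1) * Rp n j w = w ^ m * Fp j w * Qf (m + 2) j w"
        unfolding Rp_def Fp_def Pf_eq nm by (simp add: algebra_simps)
      then show "indicator {0<..<1} w * (real n * w ^ (n - 1) * Rp n j w) =
         real n * (indicator {0<..<1} w * (w ^ m * Fp j w * Qf (m + 2) j w))"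
        by (simp add: algebra_simps)
    qed
    then have e1: "(\<integral>w. indicator {0<..<1} w * (real n * w ^ (n - 1) * Rp n j w) \<partial>lborel) =
       real n * (\<integral>w. indicator {0<..<1} w * (w ^ m * Fp j w * Qf (m + 2) j w) \<partial>lborel)"
      by (simp only: integral_mult_right_zero)
    have "\<And>w. indicator {0<..<1} w * (real (m + 1) * w ^ m * Fp j w * Qf (m + 2) j w) =
         real (m + 1) * (indicator {0<..<1} w * (w ^ m * Fp j w * Qf (m + 2) j w))"
      by (simp add: algebra_simps)
    then have e2: "(\<integral>w. indicator {0<..<1} w * (real (m + 1) * w ^ m * Fp j w * Qf (m + 2) j w) \<partial>lborel) =
       real (m + 1) * (\<integral>w. indicator {0<..<1} w * (w ^ m * Fp j w * Qf (m + 2) j w) \<partial>lborel)"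
      by (simp only: integral_mult_right_zero)
    show ?thesis unfolding e1 e2 by (simp add: nm)
  qed
  also have "\<dots> = real (n - 1) * Dconst n j"
    using Dconst_eq2[of n j] assms(1) by simp
  finally show ?thesis .
qed

end
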